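(* Let $(E,\rho)$ be a weighted space and $(\psi_t)_{t\ge0}$ a family of maps $E\to E$, and set $P(t)f:=f\circ\psi_t$. Then $(P(t))_{t\ge0}$ is a generalized Feller semigroup on $\mathscr{B}^\rho(E)$ if and only if: (i) $\psi_0=\mathrm{Id}$; (ii) $\psi_{t_1}\circ\psi_{t_2}=\psi_{t_1+t_2}$ for all $t_1,t_2\ge0$; (iii) $\lim_{t\downarrow0}\psi_t(x)=x$ for all $x\in E$; (iv) for all $t\ge0$ and $R>0$ the restriction $\psi_t|_{K_R}:K_R\to E$ is continuous; (v) $C_t:=\sup_{x\in E}\rho(\psi_t(x))/\rho(x)<\infty$ for all $t\ge0$; (vi) there exist $\delta>0$ and $C>0$ with $C_t<C$ for all $0\le t<\delta$. Moreover, for such a generalized Feller semigroup, for all $t\ge0$ and $x\in E$, $$\sup\{|f(\psi_t(x))|: f\in C_b(E),\ |f|\le\rho\}=\rho(\psi_t(x)).$$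
   Context: A weighted space is a pair $(E,\rho)$ where $E$ is a completely regular Hausdorff topological space and $\rho:E\to(0,\infty)$ is an admissible weight function, meaning that for every $R\ge 0$ the sublevel set $K_R:=\{x\in E:\rho(x)\le R\}$ is compact. For $f:E\to\mathbb{R}$ put $\|f\|_\rho:=\sup_{x\in E}|f(x)|/\rho(x)$; $\mathscr{B}^\rho(E)$ denotes the closure of $C_b(E)$ with respect to $\|\cdot\|_\rho$ inside $\{f:E\to\mathbb{R}:\|f\|_\rho<\infty\}$. A generalized Feller semigroup on $\mathscr{B}^\rho(E)$ is a family $(P(t))_{t\ge0}$ of bounded linear operators on $\mathscr{B}^\rho(E)$ such that (P1) $P(0)=\mathrm{Id}$; (P2) $P(t+s)=P(s)P(t)$ for all $s,t\ge0$; (P3) $\lim_{t\downarrow0}P(t)f(x)=f(x)$ for all $f\in\mathscr{B}^\rho(E)$, $x\in E$; (P4) there exist $\varepsilon>0$, $C<\infty$ with $\|P(t)\|_{L(\mathscr{B}^\rho(E))}\le C$ for all $t\in[0,\varepsilon]$; (P5) each $P(t)$ is a positive operator. *)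

theory Defs
  imports "HOL-Analysis.Analysis"
begin

text \<open>The space E is the whole of a type 'a with its (class) topology;
  complete regularity and the Hausdorff property are stated as assumptions.\<close>

definition admissible_weight :: "('a::topological_space \<Rightarrow> real) \<Rightarrow> bool" where
  "admissible_weight \<rho> \<longleftrightarrow> (\<forall>x. \<rho> x > 0) \<and> (\<forall>R\<ge>0. compact {x. \<rho> x \<le> R})"

definition Cb :: "('a::topological_space \<Rightarrow> real) set" where
  "Cb = {f. continuous_on UNIV f \<and> bounded (range f)}"

definition wnorm :: "('a \<Rightarrow> real) \<Rightarrow> ('a \<Rightarrow> real) \<Rightarrow> real" where
  "wnorm \<rho> f = (SUP x. \<bar>f x\<bar> / \<rho> x)"

text \<open>B^rho(E): closure of C_b(E) w.r.t. the weighted norm inside the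
  functions of finite weighted norm.\<close>
definition Brho :: "('a::topological_space \<Rightarrow> real) \<Rightarrow> ('a \<Rightarrow> real) set" where
  "Brho \<rho> = {f. (\<exists>M. \<forall>x. \<bar>f x\<bar> \<le> M * \<rho> x) \<and>
      (\<forall>\<epsilon>>0. \<exists>g\<in>Cb. \<forall>x. \<bar>f x - g x\<bar> \<le> \<epsilon> * \<rho> x)}"

text \<open>Generalized Feller semigroup on B^rho(E); P t is only relevant for t \<ge> 0.\<close>
definition gen_feller :: "('a::topological_space \<Rightarrow> real) \<Rightarrow> (real \<Rightarrow> ('a \<Rightarrow> real) \<Rightarrow> ('a \<Rightarrow> real)) \<Rightarrow> bool" where
  "gen_feller \<rho> P \<longleftrightarrow>
     \<comment> \<open>each P(t) is a bounded linear operator on B^rho(E)\<close>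
     (\<forall>t\<ge>0. \<forall>f\<in>Brho \<rho>. P t f \<in> Brho \<rho>) \<and>
     (\<forall>t\<ge>0. \<forall>f\<in>Brho \<rho>. \<forall>g\<in>Brho \<rho>. \<forall>a b::real.
         P t (\<lambda>x. a * f x + b * g x) = (\<lambda>x. a * P t f x + b * P t g x)) \<and>
     (\<forall>t\<ge>0. \<exists>M. \<forall>f\<in>Brho \<rho>. wnorm \<rho> (P t f) \<le> M * wnorm \<rho> f) \<and>
     \<comment> \<open>(P1)\<close>
     (\<forall>f\<in>Brho \<rho>. P 0 f = f) \<and>
     \<comment> \<open>(P2)\<close>
     (\<forall>s\<ge>0. \<forall>t\<ge>0. \<forall>f\<in>Brho \<rho>. P (t + s) f = P s (P t f)) \<and>
     \<comment> \<open>(P3)\<close>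
     (\<forall>f\<in>Brho \<rho>. \<forall>x. ((\<lambda>t. P t f x) \<longlongrightarrow> f x) (at_right 0)) \<and>
     \<comment> \<open>(P4)\<close>
     (\<exists>\<epsilon>>0. \<exists>C. \<forall>t\<in>{0..\<epsilon>}. \<forall>f\<in>Brho \<rho>. wnorm \<rho> (P t f) \<le> C * wnorm \<rho> f) \<and>
     \<comment> \<open>(P5)\<close>
     (\<forall>t\<ge>0. \<forall>f\<in>Brho \<rho>. (\<forall>x. f x \<ge> 0) \<longrightarrow> (\<forall>x. P t f x \<ge> 0))"

definition Cconst :: "('a \<Rightarrow> real) \<Rightarrow> (real \<Rightarrow> 'a \<Rightarrow> 'a) \<Rightarrow> real \<Rightarrow> real" where
  "Cconst \<rho> \<psi> t = (SUP x. \<rho> (\<psi> t x) / \<rho> x)"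

end

theory Submission
  imports Defs "HOL-Library.Infinite_Set"
begin

locale wsp =
  fixes \<rho> :: "'a::topological_space \<Rightarrow> real"
  assumes crs: "completely_regular_space (euclidean :: 'a topology)"
    and haus: "Hausdorff_space (euclidean :: 'a topology)"
    and adm: "admissible_weight \<rho>"
begin

lemma rho_pos: "\<rho> x > 0" using adm by (simp add: admissible_weight_def)

lemma K_compact: "R \<ge> 0 \<Longrightarrow> compact {x. \<rho> x \<le> R}"
  using adm by (simp add: admissible_weight_def)

lemma open_gt: assumes "c \<ge> 0" shows "open {x. \<rho> x > c}"
proof -
  have "closedin euclidean {x. \<rho> x \<le> c}"
    using compactin_imp_closedin[OF haus] K_compact[OF assms] by simp
  then have "closed {x. \<rho> x \<le> c}" by simp
  moreover have "{x. \<rho> x > c} = - {x. \<rho> x \<le> c}" by auto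
  ultimately show ?thesis by (simp add: open_Compl)
qed

lemma rho_lower: "\<exists>m>0. \<forall>x. m \<le> \<rho> x"
proof -
  have "{x. \<rho> x \<le> 1} \<subseteq> (\<Union>n\<in>UNIV. {x. \<rho> x > 1 / real (Suc n)})"
  proof
    fix x assume "x \<in> {x. \<rho> x \<le> 1}"
    obtain n where "1 / real (Suc n) < \<rho> x" using rho_pos[of x]
      by (metis nat_approx_posE)
    then show "x \<in> (\<Union>n\<in>UNIV. {x. \<rho> x > 1 / real (Suc n)})" by auto
  qed
  then obtain J where J: "finite J" "{x. \<rho> x \<le> 1} \<subseteq> (\<Union>n\<in>J. {x. \<rho> x > 1 / real (Suc n)})"
    using compactE_image[OF K_compact[of 1], of UNIV "\<lambda>n. {x. \<rho> x > 1 / real (Suc n)}"]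
      open_gt by (metis of_nat_0_le_iff zero_le_divide_1_iff zero_le_one)
  obtain k where k: "J \<subseteq> {..<k}" using finite_nat_bounded[OF J(1)] by blast
  have "1 / real (Suc k) \<le> \<rho> x" for x
  proof (cases "\<rho> x \<le> 1")
    case True
    then obtain n where "n \<in> J" "\<rho> x > 1 / real (Suc n)" using J(2) by blast
    moreover have "1 / real (Suc k) \<le> 1 / real (Suc n)" using k \<open>n \<in> J\<close>
      by (auto simp: divide_simps)
    ultimately show ?thesis by linarith
  next
    case False
    have "1 / real (Suc k) \<le> 1" by (simp add: divide_simps)
    then show ?thesis using False by linarith
  qed
  then show ?thesis by (intro exI[of _ "1 / real (Suc k)"]) auto
qed

lemma Cb_bound: "f \<in> Cb \<Longrightarrow> \<exists>B. \<forall>x. \<bar>f x\<bar> \<le> B"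
  unfolding Cb_def by (auto simp: bounded_iff)

lemma Cb_Brho: assumes "f \<in> Cb" shows "f \<in> Brho \<rho>"
proof -
  obtain B where B: "\<forall>x. \<bar>f x\<bar> \<le> B" using Cb_bound[OF assms] by blast
  obtain m where m: "m > 0" "\<forall>x. m \<le> \<rho> x" using rho_lower by blast
  have "\<bar>f x\<bar> \<le> (B / m) * \<rho> x" for x
  proof -
    have "B \<ge> 0" using B abs_ge_zero order_trans by blast
    have "\<bar>f x\<bar> \<le> B" using B by blast
    also have "B = (B/m) * m" using m by simp
    also have "\<dots> \<le> (B/m) * \<rho> x" using m \<open>B \<ge> 0\<close> by (intro mult_left_mono) auto
    finally show ?thesis .
  qed
  then show ?thesis unfolding Brho_def using assms
    by (auto intro!: exI[of _ "B/m"] bexI[of _ f] simp: rho_pos less_imp_le)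
qed

lemma Brho_bound: "f \<in> Brho \<rho> \<Longrightarrow> \<exists>M\<ge>0. \<forall>x. \<bar>f x\<bar> \<le> M * \<rho> x"
proof -
  assume "f \<in> Brho \<rho>"
  then obtain M where M: "\<forall>x. \<bar>f x\<bar> \<le> M * \<rho> x" unfolding Brho_def by blast
  have "0 \<le> M * \<rho> x" for x using M abs_ge_zero order_trans by blast
  then have "M \<ge> 0" using rho_pos by (meson zero_le_mult_iff not_less)
  with M show ?thesis by blast
qed

lemma wnorm_upper: assumes "f \<in> Brho \<rho>" shows "\<bar>f x\<bar> / \<rho> x \<le> wnorm \<rho> f"
proof -
  obtain M where M: "\<forall>x. \<bar>f x\<bar> \<le> M * \<rho> x" using Brho_bound[OF assms] by blast
  have "bdd_above (range (\<lambda>x. \<bar>f x\<bar> / \<rho> x))"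
    using M rho_pos by (intro bdd_aboveI[of _ M]) (auto simp: divide_simps)
  then show ?thesis unfolding wnorm_def by (rule cSUP_upper[OF UNIV_I])
qed

lemma wnorm_nonneg: assumes "f \<in> Brho \<rho>" shows "0 \<le> wnorm \<rho> f"
  using wnorm_upper[OF assms, of undefined] rho_pos[of undefined]
  by (smt (verit) abs_ge_zero divide_nonneg_pos)

lemma wnorm_le: assumes "\<And>x. \<bar>f x\<bar> / \<rho> x \<le> C" shows "wnorm \<rho> f \<le> C"
  unfolding wnorm_def by (rule cSUP_least) (use assms in auto)


lemma Brho_cont: assumes "f \<in> Brho \<rho>" shows "continuous_on {x. \<rho> x \<le> R} f"
  unfolding continuous_on_def
proof (intro ballI tendstoI)
  fix x e assume x: "x \<in> {x. \<rho> x \<le> R}" and e: "(0::real) < e"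
  define R' where "R' = max R 1"
  have R': "R' > 0" "R \<le> R'" by (auto simp: R'_def)
  obtain g where g: "g \<in> Cb" "\<forall>y. \<bar>f y - g y\<bar> \<le> (e/3/R') * \<rho> y"
  proof -
    have "e/3/R' > 0" using e R' by simp
    then show ?thesis using assms that unfolding Brho_def by blast
  qed
  have close: "\<bar>f y - g y\<bar> \<le> e/3" if "\<rho> y \<le> R" for y
  proof -
    have "\<bar>f y - g y\<bar> \<le> (e/3/R') * \<rho> y" using g by blast
    also have "\<dots> \<le> (e/3/R') * R'" using that R' e by (intro mult_left_mono) auto
    also have "\<dots> = e/3" using R' by simp
    finally show ?thesis .
  qed
  have "continuous_on UNIV g" using g unfolding Cb_def by blast
  then have "(g \<longlongrightarrow> g x) (at x within {x. \<rho> x \<le> R})"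
  proof -
    have "continuous_on {x. \<rho> x \<le> R} g" by (rule continuous_on_subset[OF \<open>continuous_on UNIV g\<close>]) auto
    then show ?thesis using x unfolding continuous_on_def by blast
  qed
  then have ev: "\<forall>\<^sub>F y in at x within {x. \<rho> x \<le> R}. dist (g y) (g x) < e/3"
    using e by (intro tendstoD) auto
  have inK: "\<forall>\<^sub>F y in at x within {x. \<rho> x \<le> R}. y \<in> {x. \<rho> x \<le> R}"
    by (simp add: eventually_at_filter)
  show "\<forall>\<^sub>F y in at x within {x. \<rho> x \<le> R}. dist (f y) (f x) < e"
  proof (rule eventually_mono[OF eventually_conj[OF ev inK]])
    fix y assume "dist (g y) (g x) < e / 3 \<and> y \<in> {x. \<rho> x \<le> R}"
    then have "\<bar>g y - g x\<bar> < e/3" "\<bar>f y - g y\<bar> \<le> e/3" "\<bar>f x - g x\<bar> \<le> e/3"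
      using close x by (auto simp: dist_real_def)
    then show "dist (f y) (f x) < e" unfolding dist_real_def by linarith
  qed
qed


lemma sep: fixes U :: "'a set" assumes "open U" "x \<in> U"
  shows "\<exists>f\<in>Cb. f x = 0 \<and> (\<forall>y. y \<notin> U \<longrightarrow> f y = 1) \<and> (\<forall>y. 0 \<le> f y \<and> f y \<le> 1)"
proof -
  have "closedin euclidean (-U)" using assms by (simp add: closed_open)
  moreover have "x \<in> topspace euclidean - (-U)" using assms by simp
  ultimately obtain f :: "'a \<Rightarrow> real" where f: "continuous_map euclidean (top_of_set {0..1}) f"
     "f x = 0" "f ` (-U) \<subseteq> {1}"
    using crs unfolding completely_regular_space_def by blast
  then have c: "continuous_on UNIV f" and r: "\<forall>y. f y \<in> {0..1}"
    by (auto simp: continuous_map_in_subtopology)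
  have "bounded (range f)" using r
    by (intro boundedI[of _ 1]) auto
  then have "f \<in> Cb" using c by (simp add: Cb_def)
  then show ?thesis using f r by (intro bexI[of _ f]) auto
qed

lemma Cb_separates: fixes a b :: 'a assumes "\<forall>f\<in>Cb. f a = f b" shows "a = b"
proof (rule ccontr)
  assume "a \<noteq> b"
  have "t1_space (euclidean::'a topology)" by (rule Hausdorff_imp_t1_space[OF haus])
  then have "closedin euclidean {b}" by (rule closedin_t1_singleton) simp
  then have "open (-{b})" by (simp add: open_closed)
  then obtain f where "f \<in> Cb" "f a = 0" "f b = 1" using sep[of "-{b}" a] \<open>a \<noteq> b\<close> by auto
  then show False using assms by auto
qed

lemma sup_key: assumes "0 < c" "c < \<rho> y"
  shows "\<exists>f\<in>Cb. (\<forall>z. \<bar>f z\<bar> \<le> \<rho> z) \<and> f y = c"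
proof -
  obtain g where g: "g \<in> Cb" "g y = 0" "\<forall>z. z \<notin> {x. \<rho> x > c} \<longrightarrow> g z = 1" "\<forall>z. 0 \<le> g z \<and> g z \<le> 1"
    using sep[of "{x. \<rho> x > c}" y] open_gt assms by auto
  define f where "f z = c * (1 - g z)" for z
  have fz: "0 \<le> f z \<and> f z \<le> c" for z
    using g(4)[rule_format, of z] assms unfolding f_def
    by (simp add: mult_le_cancel_left1)
  have "continuous_on UNIV f" using g(1) unfolding f_def Cb_def by (auto intro!: continuous_intros)
  moreover have "bounded (range f)" using fz
    by (intro boundedI[of _ c]) (force simp: abs_le_iff)
  ultimately have "f \<in> Cb" by (simp add: Cb_def)
  moreover have "\<bar>f z\<bar> \<le> \<rho> z" for z
  proof (cases "\<rho> z > c")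
    case True
    have "0 \<le> f z" "f z \<le> c" using fz by auto
    then show ?thesis using True by auto
  next
    case False then show ?thesis using g(3) rho_pos[of z] by (auto simp: f_def)
  qed
  ultimately show ?thesis using g(2) by (intro bexI[of _ f]) (auto simp: f_def)
qed

lemma approx: assumes B: "\<And>x. \<bar>h x\<bar> \<le> B" and c: "\<And>R. R > 0 \<Longrightarrow> continuous_on {x. \<rho> x \<le> R} h"
  and e: "e > 0"
  shows "\<exists>g\<in>Cb. \<forall>x. \<bar>h x - g x\<bar> \<le> e * \<rho> x"
proof -
  have B0: "B \<ge> 0" using B[of undefined] by linarith
  define R where "R = 2*B/e + 1"
  have R: "R > 0" using B0 e by (simp add: R_def add_nonneg_pos)
  have cm: "continuous_map (subtopology euclidean {x. \<rho> x \<le> R}) euclidean h" using c[OF R] by simp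
  have "compactin euclidean {x. \<rho> x \<le> R}" using K_compact R by simp
  then obtain g where g: "continuous_map euclidean euclideanreal g" "g ` topspace euclidean \<subseteq> {-B..B}"
    "\<And>x. x \<in> {x. \<rho> x \<le> R} \<Longrightarrow> g x = h x"
  proof -
    have "h ` {x. \<rho> x \<le> R} \<subseteq> {-B..B}"
    proof
      fix y assume "y \<in> h ` {x. \<rho> x \<le> R}"
      then obtain x where "y = h x" by blast
      then show "y \<in> {-B..B}" using B[of x] by (simp add: abs_le_iff)
    qed
    moreover have "{-B..B} \<noteq> {}" using B0 by simp
    ultimately show ?thesis
      using Tietze_extension_completely_regular[OF crs \<open>compactin euclidean {x. \<rho> x \<le> R}\<close> is_interval_cc _ cm] that
      by blast
  qed
  have gb: "\<bar>g x\<bar> \<le> B" for x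
  proof -
    have "g x \<in> {-B..B}" using g(2) by (simp add: image_subset_iff)
    then show ?thesis by (simp add: abs_le_iff)
  qed
  have "bounded (range g)" using gb by (intro boundedI[of _ B]) auto
  then have "g \<in> Cb" using g(1) by (simp add: Cb_def)
  moreover have "\<bar>h x - g x\<bar> \<le> e * \<rho> x" for x
  proof (cases "\<rho> x \<le> R")
    case True then show ?thesis using g(3)[of x] e rho_pos[of x] by simp
  next
    case False
    have "\<bar>h x - g x\<bar> \<le> 2 * B" using B[of x] gb[of x] by linarith
    also have "\<dots> \<le> e * R" using e by (simp add: R_def distrib_left)
    also have "\<dots> \<le> e * \<rho> x" using False e by simp
    finally show ?thesis .
  qed
  ultimately show ?thesis by blast
qed


lemma le_rho_Brho: assumes "f \<in> Cb" "\<forall>y. \<bar>f y\<bar> \<le> \<rho> y" shows "f \<in> Brho \<rho>"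
  unfolding Brho_def using assms rho_pos
  by (auto intro!: exI[of _ 1] bexI[of _ f] simp: less_imp_le)

lemma sup_identity: "(SUP f\<in>{f\<in>Cb. \<forall>y. \<bar>f y\<bar> \<le> \<rho> y}. \<bar>f z\<bar>) = \<rho> z"
proof (rule antisym)
  have ne: "{f\<in>Cb. \<forall>y. \<bar>f y\<bar> \<le> \<rho> y} \<noteq> {}"
  proof -
    have "(\<lambda>_. 0) \<in> Cb" by (simp add: Cb_def)
    moreover have "\<forall>y. \<bar>(0::real)\<bar> \<le> \<rho> y" using rho_pos by (simp add: less_imp_le)
    ultimately show ?thesis by blast
  qed
  show "(SUP f\<in>{f\<in>Cb. \<forall>y. \<bar>f y\<bar> \<le> \<rho> y}. \<bar>f z\<bar>) \<le> \<rho> z"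
    by (rule cSUP_least[OF ne]) auto
  have bdd: "bdd_above ((\<lambda>f. \<bar>f z\<bar>) ` {f\<in>Cb. \<forall>y. \<bar>f y\<bar> \<le> \<rho> y})"
    by (intro bdd_aboveI[of _ "\<rho> z"]) auto
  show "\<rho> z \<le> (SUP f\<in>{f\<in>Cb. \<forall>y. \<bar>f y\<bar> \<le> \<rho> y}. \<bar>f z\<bar>)"
  proof (rule dense_le_bounded[OF rho_pos[of z, unfolded zero_less_iff_neq_zero[symmetric]]])
    fix w assume w: "0 < w" "w < \<rho> z"
    then obtain f where f: "f \<in> Cb" "\<forall>y. \<bar>f y\<bar> \<le> \<rho> y" "f z = w" using sup_key by blast
    then have "\<bar>f z\<bar> \<le> (SUP f\<in>{f\<in>Cb. \<forall>y. \<bar>f y\<bar> \<le> \<rho> y}. \<bar>f z\<bar>)"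
      by (intro cSUP_upper[OF _ bdd]) auto
    then show "w \<le> (SUP f\<in>{f\<in>Cb. \<forall>y. \<bar>f y\<bar> \<le> \<rho> y}. \<bar>f z\<bar>)" using f w by simp
  qed
qed

lemma op_bound: fixes \<phi> :: "'a \<Rightarrow> 'a"
  assumes cl: "\<forall>f\<in>Brho \<rho>. f \<circ> \<phi> \<in> Brho \<rho>"
    and nb: "\<forall>f\<in>Brho \<rho>. wnorm \<rho> (f\<circ>\<phi>) \<le> M * wnorm \<rho> f"
  shows "\<rho> (\<phi> x) \<le> max M 0 * \<rho> x"
proof (rule ccontr)
  define K where "K = max M 0"
  assume "\<not> \<rho> (\<phi> x) \<le> max M 0 * \<rho> x"
  then have lt: "K * \<rho> x < \<rho> (\<phi> x)" by (simp add: K_def)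
  have K0: "K \<ge> 0" by (simp add: K_def)
  define c where "c = (K * \<rho> x + \<rho> (\<phi> x)) / 2"
  have "0 \<le> K * \<rho> x" using K0 rho_pos[of x] by simp
  then have c: "0 < c" "c < \<rho> (\<phi> x)" "K * \<rho> x < c" using lt
    by (auto simp: c_def)
  obtain f where f: "f \<in> Cb" "\<forall>y. \<bar>f y\<bar> \<le> \<rho> y" "f (\<phi> x) = c" using sup_key[OF c(1,2)] by blast
  have fB: "f \<in> Brho \<rho>" by (rule le_rho_Brho[OF f(1,2)])
  have w1: "wnorm \<rho> f \<le> 1" using f(2) rho_pos by (intro wnorm_le) (simp add: divide_simps)
  have w0: "0 \<le> wnorm \<rho> f" by (rule wnorm_nonneg[OF fB])
  have "c / \<rho> x = \<bar>(f \<circ> \<phi>) x\<bar> / \<rho> x" using f(3) c by simp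
  also have "\<dots> \<le> wnorm \<rho> (f \<circ> \<phi>)" by (rule wnorm_upper) (use cl fB in blast)
  also have "\<dots> \<le> M * wnorm \<rho> f" using nb fB by blast
  also have "\<dots> \<le> K"
  proof (cases "M \<ge> 0")
    case True then show ?thesis using w1 unfolding K_def by (simp add: mult_left_le)
  next
    case False then show ?thesis using w0 unfolding K_def by (simp add: mult_nonpos_nonneg)
  qed
  finally have "c \<le> K * \<rho> x" using rho_pos[of x] by (simp add: divide_simps)
  then show False using c by linarith
qed


lemma forward:
  fixes \<psi> :: "real \<Rightarrow> 'a \<Rightarrow> 'a"
  assumes G: "gen_feller \<rho> (\<lambda>t f. f \<circ> \<psi> t)"
  shows "\<psi> 0 = id \<and>
           (\<forall>t1\<ge>0. \<forall>t2\<ge>0. \<psi> t1 \<circ> \<psi> t2 = \<psi> (t1 + t2)) \<and>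
           (\<forall>x. ((\<lambda>t. \<psi> t x) \<longlongrightarrow> x) (at_right 0)) \<and>
           (\<forall>t\<ge>0. \<forall>R>0. continuous_on {x. \<rho> x \<le> R} (\<psi> t)) \<and>
           (\<forall>t\<ge>0. bdd_above (range (\<lambda>x. \<rho> (\<psi> t x) / \<rho> x))) \<and>
           (\<exists>\<delta>>0. \<exists>C>0. \<forall>t. 0 \<le> t \<and> t < \<delta> \<longrightarrow> Cconst \<rho> \<psi> t < C)"
proof -
  have cl: "\<And>t f. t \<ge> 0 \<Longrightarrow> f \<in> Brho \<rho> \<Longrightarrow> f \<circ> \<psi> t \<in> Brho \<rho>"
    and bd: "\<And>t. t \<ge> 0 \<Longrightarrow> \<exists>M. \<forall>f\<in>Brho \<rho>. wnorm \<rho> (f \<circ> \<psi> t) \<le> M * wnorm \<rho> f"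
    and P1: "\<And>f. f \<in> Brho \<rho> \<Longrightarrow> f \<circ> \<psi> 0 = f"
    and P2: "\<And>s t f. s \<ge> 0 \<Longrightarrow> t \<ge> 0 \<Longrightarrow> f \<in> Brho \<rho> \<Longrightarrow> f \<circ> \<psi> (t + s) = f \<circ> \<psi> t \<circ> \<psi> s"
    and P3: "\<And>f x. f \<in> Brho \<rho> \<Longrightarrow> ((\<lambda>t. f (\<psi> t x)) \<longlongrightarrow> f x) (at_right 0)"
    and P4: "\<exists>\<epsilon>>0. \<exists>C. \<forall>t\<in>{0..\<epsilon>}. \<forall>f\<in>Brho \<rho>. wnorm \<rho> (f \<circ> \<psi> t) \<le> C * wnorm \<rho> f"
    using G unfolding gen_feller_def by (simp_all add: o_def)
  have i: "\<psi> 0 = id"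
  proof
    fix x show "\<psi> 0 x = id x"
      using Cb_separates[of "\<psi> 0 x" x] P1[OF Cb_Brho] by (metis comp_apply id_apply)
  qed
  have ii: "\<psi> t1 \<circ> \<psi> t2 = \<psi> (t1 + t2)" if "t1 \<ge> 0" "t2 \<ge> 0" for t1 t2
  proof
    fix x show "(\<psi> t1 \<circ> \<psi> t2) x = \<psi> (t1 + t2) x"
      using Cb_separates[of "(\<psi> t1 \<circ> \<psi> t2) x" "\<psi> (t1 + t2) x"] P2[OF that(2,1) Cb_Brho]
      by (metis comp_apply)
  qed
  have iii: "((\<lambda>t. \<psi> t x) \<longlongrightarrow> x) (at_right 0)" for x
  proof (rule topological_tendstoI)
    fix U assume U: "open U" "x \<in> U"
    obtain f where f: "f \<in> Cb" "f x = 0" "\<forall>y. y \<notin> U \<longrightarrow> f y = 1" using sep[OF U] by blast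
    have "((\<lambda>t. f (\<psi> t x)) \<longlongrightarrow> 0) (at_right 0)" using P3[OF Cb_Brho[OF f(1)], of x] f(2) by simp
    then have "\<forall>\<^sub>F t in at_right 0. dist (f (\<psi> t x)) 0 < 1" by (rule tendstoD) simp
    then show "\<forall>\<^sub>F t in at_right 0. \<psi> t x \<in> U"
      by (rule eventually_mono) (use f(3) in force)
  qed
  have iv: "continuous_on {x. \<rho> x \<le> R} (\<psi> t)" if "t \<ge> 0" for t R
    unfolding continuous_on_topological
  proof (intro ballI allI impI)
    fix x B assume x: "x \<in> {x. \<rho> x \<le> R}" and B: "open B" "\<psi> t x \<in> B"
    obtain f where f: "f \<in> Cb" "f (\<psi> t x) = 0" "\<forall>y. y \<notin> B \<longrightarrow> f y = 1" using sep[OF B] by blast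
    have "continuous_on {x. \<rho> x \<le> R} (f \<circ> \<psi> t)" by (rule Brho_cont[OF cl[OF that Cb_Brho[OF f(1)]]])
    then obtain A where A: "open A" "x \<in> A" "\<forall>y\<in>{x. \<rho> x \<le> R}. y \<in> A \<longrightarrow> (f \<circ> \<psi> t) y \<in> {r. r < 1}"
      using x f(2) unfolding continuous_on_topological by (metis (mono_tags) comp_apply mem_Collect_eq open_lessThan lessThan_def zero_less_one)
    then show "\<exists>A. open A \<and> x \<in> A \<and> (\<forall>y\<in>{x. \<rho> x \<le> R}. y \<in> A \<longrightarrow> \<psi> t y \<in> B)"
      using f(3) by (intro exI[of _ A]) force
  qed
  have v: "\<rho> (\<psi> t x) \<le> max M 0 * \<rho> x" if "t \<ge> 0" "\<forall>f\<in>Brho \<rho>. wnorm \<rho> (f \<circ> \<psi> t) \<le> M * wnorm \<rho> f" for t M x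
    by (rule op_bound) (use that cl in auto)
  have vb: "\<rho> (\<psi> t x) / \<rho> x \<le> max M 0" if "t \<ge> 0" "\<forall>f\<in>Brho \<rho>. wnorm \<rho> (f \<circ> \<psi> t) \<le> M * wnorm \<rho> f" for t M x
    using v[OF that, of x] rho_pos[of x] by (simp add: divide_simps)
  have vv: "bdd_above (range (\<lambda>x. \<rho> (\<psi> t x) / \<rho> x))" if t0: "t \<ge> 0" for t
  proof -
    obtain M where "\<forall>f\<in>Brho \<rho>. wnorm \<rho> (f \<circ> \<psi> t) \<le> M * wnorm \<rho> f" using bd[OF t0] by blast
    then show ?thesis using vb[OF t0] by (intro bdd_aboveI[of _ "max M 0"]) auto
  qed
  obtain \<epsilon> C where eC: "\<epsilon> > 0" "\<forall>t\<in>{0..\<epsilon>}. \<forall>f\<in>Brho \<rho>. wnorm \<rho> (f \<circ> \<psi> t) \<le> C * wnorm \<rho> f"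
    using P4 by blast
  have vi: "Cconst \<rho> \<psi> t < max C 0 + 1" if "0 \<le> t" "t < \<epsilon>" for t
  proof -
    have "Cconst \<rho> \<psi> t \<le> max C 0" unfolding Cconst_def
      by (rule cSUP_least) (use vb[OF that(1)] eC that in auto)
    then show ?thesis by linarith
  qed
  have "\<exists>\<delta>>0. \<exists>C>0. \<forall>t. 0 \<le> t \<and> t < \<delta> \<longrightarrow> Cconst \<rho> \<psi> t < C"
    using vi eC(1) by (intro exI[of _ \<epsilon>] conjI exI[of _ "max C 0 + 1"]) auto
  then show ?thesis using i ii iii iv vv by simp
qed


lemma backward:
  fixes \<psi> :: "real \<Rightarrow> 'a \<Rightarrow> 'a"
  assumes h0: "\<psi> 0 = id"
    and h2: "\<forall>t1\<ge>0. \<forall>t2\<ge>0. \<psi> t1 \<circ> \<psi> t2 = \<psi> (t1 + t2)"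
    and h3: "\<forall>x. ((\<lambda>t. \<psi> t x) \<longlongrightarrow> x) (at_right 0)"
    and h4: "\<forall>t\<ge>0. \<forall>R>0. continuous_on {x. \<rho> x \<le> R} (\<psi> t)"
    and h5: "\<forall>t\<ge>0. bdd_above (range (\<lambda>x. \<rho> (\<psi> t x) / \<rho> x))"
    and h6: "\<exists>\<delta>>0. \<exists>C>0. \<forall>t. 0 \<le> t \<and> t < \<delta> \<longrightarrow> Cconst \<rho> \<psi> t < C"
  shows "gen_feller \<rho> (\<lambda>t f. f \<circ> \<psi> t)"
proof -
  have rat: "\<rho> (\<psi> t x) / \<rho> x \<le> Cconst \<rho> \<psi> t" if "t \<ge> 0" for t x
    unfolding Cconst_def by (rule cSUP_upper[OF UNIV_I]) (use h5 that in simp)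
  have Ct: "\<rho> (\<psi> t x) \<le> Cconst \<rho> \<psi> t * \<rho> x" if "t \<ge> 0" for t x
    using rat[OF that, of x] rho_pos[of x] by (simp add: divide_simps)
  have C0: "0 \<le> Cconst \<rho> \<psi> t" if "t \<ge> 0" for t
    using rat[OF that, of undefined] rho_pos[of undefined] rho_pos[of "\<psi> t undefined"]
    by (smt (verit) divide_pos_pos)
  have cl: "f \<circ> \<psi> t \<in> Brho \<rho>" if t: "t \<ge> 0" and f: "f \<in> Brho \<rho>" for f t
  proof -
    obtain M where M: "M \<ge> 0" "\<forall>x. \<bar>f x\<bar> \<le> M * \<rho> x" using Brho_bound[OF f] by blast
    define K where "K = max 1 (Cconst \<rho> \<psi> t)"
    have K: "K > 0" "\<And>x. \<rho> (\<psi> t x) \<le> K * \<rho> x"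
    proof -
      show "K > 0" by (simp add: K_def)
      fix x have "Cconst \<rho> \<psi> t * \<rho> x \<le> K * \<rho> x" using rho_pos[of x]
        by (intro mult_right_mono) (auto simp: K_def)
      then show "\<rho> (\<psi> t x) \<le> K * \<rho> x" using Ct[OF t, of x] by linarith
    qed
    have b: "\<bar>(f \<circ> \<psi> t) x\<bar> \<le> (M * K) * \<rho> x" for x
    proof -
      have "\<bar>(f \<circ> \<psi> t) x\<bar> \<le> M * \<rho> (\<psi> t x)" using M by simp
      also have "\<dots> \<le> M * (K * \<rho> x)" using M(1) K(2) by (intro mult_left_mono) auto
      finally show ?thesis by simp
    qed
    have a: "\<exists>g\<in>Cb. \<forall>x. \<bar>(f \<circ> \<psi> t) x - g x\<bar> \<le> e * \<rho> x" if e: "e > 0" for e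
    proof -
      obtain h where h: "h \<in> Cb" "\<forall>x. \<bar>f x - h x\<bar> \<le> (e/2/K) * \<rho> x"
      proof -
        have "e/2/K > 0" using e K by simp
        then show ?thesis using f that unfolding Brho_def by blast
      qed
      obtain B where B: "\<forall>x. \<bar>h x\<bar> \<le> B" using Cb_bound[OF h(1)] by blast
      have hc: "continuous_on UNIV h" using h(1) by (simp add: Cb_def)
      have "continuous_on {x. \<rho> x \<le> R} (h \<circ> \<psi> t)" if "R > 0" for R
        by (rule continuous_on_compose[OF h4[rule_format, OF t that] continuous_on_subset[OF hc]]) auto
      then obtain g where g: "g \<in> Cb" "\<forall>x. \<bar>(h \<circ> \<psi> t) x - g x\<bar> \<le> (e/2) * \<rho> x"
        using approx[of "h \<circ> \<psi> t" B "e/2"] B e by auto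
      have "\<bar>(f \<circ> \<psi> t) x - g x\<bar> \<le> e * \<rho> x" for x
      proof -
        have "\<bar>f (\<psi> t x) - h (\<psi> t x)\<bar> \<le> (e/2/K) * \<rho> (\<psi> t x)" using h(2) by blast
        also have "\<dots> \<le> (e/2/K) * (K * \<rho> x)" using K e by (intro mult_left_mono) auto
        also have "\<dots> = (e/2) * \<rho> x" using K by simp
        finally have "\<bar>f (\<psi> t x) - h (\<psi> t x)\<bar> \<le> (e/2) * \<rho> x" .
        moreover have "\<bar>h (\<psi> t x) - g x\<bar> \<le> (e/2) * \<rho> x" using g(2) by simp
        moreover have "e/2 * \<rho> x + e/2 * \<rho> x = e * \<rho> x" by (simp add: field_simps)
        moreover have "\<bar>f (\<psi> t x) - g x\<bar> \<le> \<bar>f (\<psi> t x) - h (\<psi> t x)\<bar> + \<bar>h (\<psi> t x) - g x\<bar>"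
          by linarith
        ultimately show ?thesis unfolding comp_apply by linarith
      qed
      then show ?thesis using g(1) by blast
    qed
    show ?thesis unfolding Brho_def using a b by blast
  qed
  have nb: "wnorm \<rho> (f \<circ> \<psi> t) \<le> Cconst \<rho> \<psi> t * wnorm \<rho> f" if t: "t \<ge> 0" and f: "f \<in> Brho \<rho>" for f t
  proof (rule wnorm_le)
    fix x
    have "\<bar>(f \<circ> \<psi> t) x\<bar> / \<rho> x = (\<bar>f (\<psi> t x)\<bar> / \<rho> (\<psi> t x)) * (\<rho> (\<psi> t x) / \<rho> x)"
      using rho_pos[of "\<psi> t x"] by simp
    also have "\<dots> \<le> wnorm \<rho> f * Cconst \<rho> \<psi> t"
      by (intro mult_mono wnorm_upper[OF f] rat[OF t] wnorm_nonneg[OF f]) (use rho_pos in \<open>auto simp: less_imp_le\<close>)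
    finally show "\<bar>(f \<circ> \<psi> t) x\<bar> / \<rho> x \<le> Cconst \<rho> \<psi> t * wnorm \<rho> f" by (simp add: mult.commute)
  qed
  obtain \<delta> C where dC: "\<delta> > 0" "C > 0" "\<forall>t. 0 \<le> t \<and> t < \<delta> \<longrightarrow> Cconst \<rho> \<psi> t < C" using h6 by blast
  have P4: "\<exists>\<epsilon>>0. \<exists>C. \<forall>t\<in>{0..\<epsilon>}. \<forall>f\<in>Brho \<rho>. wnorm \<rho> (f \<circ> \<psi> t) \<le> C * wnorm \<rho> f"
  proof -
    have "wnorm \<rho> (f \<circ> \<psi> t) \<le> C * wnorm \<rho> f" if t: "t \<in> {0..\<delta>/2}" and f: "f \<in> Brho \<rho>" for t f
    proof -
      have "Cconst \<rho> \<psi> t \<le> C" using dC t by (simp add: less_imp_le)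
      then have "Cconst \<rho> \<psi> t * wnorm \<rho> f \<le> C * wnorm \<rho> f"
        by (intro mult_right_mono wnorm_nonneg[OF f])
      then show ?thesis using nb[OF _ f, of t] t by simp
    qed
    moreover have "\<delta>/2 > 0" using dC by simp
    ultimately show ?thesis by blast
  qed
  have P3: "((\<lambda>t. (f \<circ> \<psi> t) x) \<longlongrightarrow> f x) (at_right 0)" if f: "f \<in> Brho \<rho>" for f x
  proof -
    define R where "R = max 1 C * \<rho> x"
    have R: "R > 0" "x \<in> {x. \<rho> x \<le> R}" using rho_pos[of x] by (auto simp: R_def mult_le_cancel_right1)
    have ev: "\<forall>\<^sub>F t in at_right 0. \<psi> t x \<in> {x. \<rho> x \<le> R}"
    proof -
      have "\<forall>\<^sub>F t in at_right (0::real). 0 < t \<and> t < \<delta>"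
        using dC(1) by (simp add: eventually_at_right_field) (meson order.strict_trans)
      then show ?thesis
      proof (rule eventually_mono)
        fix t :: real assume t: "0 < t \<and> t < \<delta>"
        then have "\<rho> (\<psi> t x) \<le> Cconst \<rho> \<psi> t * \<rho> x" by (intro Ct) simp
        also have "\<dots> \<le> max 1 C * \<rho> x"
        proof -
          have "Cconst \<rho> \<psi> t < C" using dC(3) t by auto
          then show ?thesis using rho_pos[of x] by (intro mult_right_mono) auto
        qed
        finally show "\<psi> t x \<in> {x. \<rho> x \<le> R}" by (simp add: R_def)
      qed
    qed
    have "((\<lambda>t. f (\<psi> t x)) \<longlongrightarrow> f x) (at_right 0)"
      by (rule continuous_on_tendsto_compose[OF Brho_cont[OF f] h3[rule_format] R(2) ev])
    then show ?thesis by (simp add: o_def)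
  qed
  show ?thesis unfolding gen_feller_def
  proof (intro conjI)
    show "\<forall>t\<ge>0. \<forall>f\<in>Brho \<rho>. f \<circ> \<psi> t \<in> Brho \<rho>" using cl by blast
    show "\<forall>t\<ge>0. \<forall>f\<in>Brho \<rho>. \<forall>g\<in>Brho \<rho>. \<forall>a b. (\<lambda>x. a * f x + b * g x) \<circ> \<psi> t = (\<lambda>x. a * (f \<circ> \<psi> t) x + b * (g \<circ> \<psi> t) x)"
      by (simp add: o_def)
    show "\<forall>t\<ge>0. \<exists>M. \<forall>f\<in>Brho \<rho>. wnorm \<rho> (f \<circ> \<psi> t) \<le> M * wnorm \<rho> f" using nb by blast
    show "\<forall>f\<in>Brho \<rho>. f \<circ> \<psi> 0 = f" using h0 by simp
    show "\<forall>s\<ge>0. \<forall>t\<ge>0. \<forall>f\<in>Brho \<rho>. f \<circ> \<psi> (t + s) = f \<circ> \<psi> t \<circ> \<psi> s"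
      using h2 by (simp add: comp_assoc)
    show "\<forall>f\<in>Brho \<rho>. \<forall>x. ((\<lambda>t. (f \<circ> \<psi> t) x) \<longlongrightarrow> f x) (at_right 0)" using P3 by blast
    show "\<exists>\<epsilon>>0. \<exists>C. \<forall>t\<in>{0..\<epsilon>}. \<forall>f\<in>Brho \<rho>. wnorm \<rho> (f \<circ> \<psi> t) \<le> C * wnorm \<rho> f" by (rule P4)
    show "\<forall>t\<ge>0. \<forall>f\<in>Brho \<rho>. (\<forall>x. 0 \<le> f x) \<longrightarrow> (\<forall>x. 0 \<le> (f \<circ> \<psi> t) x)" by simp
  qed
qed

end

theorem mainTheorem15:
  fixes \<rho> :: "'a::topological_space \<Rightarrow> real"
    and \<psi> :: "real \<Rightarrow> 'a \<Rightarrow> 'a"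
  assumes "completely_regular_space (euclidean :: 'a topology)"
    and "Hausdorff_space (euclidean :: 'a topology)"
    and "admissible_weight \<rho>"
  shows "(gen_feller \<rho> (\<lambda>t f. f \<circ> \<psi> t) \<longleftrightarrow>
           \<psi> 0 = id \<and>
           (\<forall>t1\<ge>0. \<forall>t2\<ge>0. \<psi> t1 \<circ> \<psi> t2 = \<psi> (t1 + t2)) \<and>
           (\<forall>x. ((\<lambda>t. \<psi> t x) \<longlongrightarrow> x) (at_right 0)) \<and>
           (\<forall>t\<ge>0. \<forall>R>0. continuous_on {x. \<rho> x \<le> R} (\<psi> t)) \<and>
           (\<forall>t\<ge>0. bdd_above (range (\<lambda>x. \<rho> (\<psi> t x) / \<rho> x))) \<and>
           (\<exists>\<delta>>0. \<exists>C>0. \<forall>t. 0 \<le> t \<and> t < \<delta> \<longrightarrow> Cconst \<rho> \<psi> t < C))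
         \<and> (gen_feller \<rho> (\<lambda>t f. f \<circ> \<psi> t) \<longrightarrow>
           (\<forall>t\<ge>0. \<forall>x. (SUP f\<in>{f\<in>Cb. \<forall>y. \<bar>f y\<bar> \<le> \<rho> y}. \<bar>f (\<psi> t x)\<bar>) = \<rho> (\<psi> t x)))"
proof -
  interpret wsp \<rho> using assms by (unfold_locales)
  show ?thesis
    apply (rule conjI[OF iffI])
      apply (erule forward)
     apply (elim conjE)
     apply (rule backward; assumption)
    using sup_identity apply blast
    done
qed

end
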